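(* (i) For each $m\in\{1,\dots,M\}$ and every measurable $q:\mathbb R^{p-\#\mathcal X(m)}\to\mathbb R$ with $\mathbb E|q(\boldsymbol X_{-\mathcal X(m)})|<\infty$, almost surely $$|\mathbb E q(\boldsymbol X_{-\mathcal X(m)})-\mathbb E(q(\boldsymbol X_{-\mathcal X(m)})\mid\boldsymbol X_{\mathcal X(m)})|\le\frac{\delta_0\,\mathbb E|q(\boldsymbol X_{-\mathcal X(m)})|}{\min_{1\le m'\le M,\ l\in\mathcal X(m'),\ a\in\{0,1\}}\mathbb P(X_l=a)}.$$ (ii) For all distinct $l,k\in\{1,\dots,M\}$ and every measurable $q:\mathbb R^{p-\#\mathcal X(l)}\to\mathbb R$, almost surely $$|\mathbb E(q(\boldsymbol X_{-\mathcal X(l)})\mid\boldsymbol X_{\mathcal X(k)},\boldsymbol X_{\mathcal X(l)})-\mathbb E(q(\boldsymbol X_{-\mathcal X(l)})\mid\boldsymbol X_{\mathcal X(k)})|\le\frac{2\delta_0\,\mathbb E|q(\boldsymbol X_{-\mathcal X(l)})|}{p_{\min}}.$$ (iii) For all distinct $l,k\in\{1,\dots,M\}$ and every measurable $q:\mathbb R^{p-\#\mathcal X(\{l,k\})}\to\mathbb R$, almost surely $$|\mathbb E(q(\boldsymbol X_{-\mathcal X(\{k,l\})})\mid\boldsymbol X_{\mathcal X(k)},\boldsymbol X_{\mathcal X(l)})-\mathbb E q(\boldsymbol X_{-\mathcal X(\{k,l\})})|\le\frac{3\delta_0\,\mathbb E|q(\boldsymbol X_{-\mathcal X(\{k,l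\})})|}{p_{\min}}.$$
   Context: Setup. $\boldsymbol X=(X_1,\dots,X_p)^\top$ is a random vector in $\{0,1\}^p$; $\{1,\dots,p\}$ is partitioned into disjoint nonempty feature groups $\mathcal X(1),\dots,\mathcal X(M)$; a group is either a single feature or has $\#\mathcal X(m)>1$ and consists of one-hot indicators ($\sum_{j\in\mathcal X(m)}\mathbf 1\{X_j=1\}=1$ a.s.). $\mathcal X(J)=\bigcup_{m\in J}\mathcal X(m)$; $\boldsymbol X_H=(X_j)_{j\in H}$, $\boldsymbol X_{-H}=(X_j)_{j\notin H}$. Conditional expectations/probabilities given null events are set to $0$. $p_{\min}=\min_{1\le l<k\le M,\,i\in\mathcal X(l),\,j\in\mathcal X(k),\,(a,b)\in\{0,1\}^2}\mathbb P(X_i=a,X_j=b)>0$; $\delta_0=\max_{1\le m\le M}\inf\{\delta\ge0:\mathbb P(\max_{i\in\mathcal X(m)}|\mathbb P(X_i=1\mid\boldsymbol X_{-\mathcal X(m)})-\mathbb P(X_i=1)|\le\delta)=1\}$. *)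

theory Defs
  imports "HOL-Probability.Probability"
begin

text \<open>A random vector X in {0,1}^p is modelled by its (discrete) law P, a pmf on
  vectors x :: nat => bool (x j = True meaning X_j = 1), indices 1..p.\<close>

definition restr :: "nat set \<Rightarrow> (nat \<Rightarrow> bool) \<Rightarrow> (nat \<Rightarrow> bool)" where
  "restr S x = (\<lambda>j. if j \<in> S then x j else False)"

definition agree :: "nat set \<Rightarrow> (nat \<Rightarrow> bool) \<Rightarrow> (nat \<Rightarrow> bool) set" where
  "agree G x = {y. \<forall>j\<in>G. y j = x j}"

text \<open>Conditional probability / expectation given an event; null events give 0.\<close>
definition cprob :: "'a pmf \<Rightarrow> 'a set \<Rightarrow> 'a set \<Rightarrow> real" where
  "cprob P A B = (if measure_pmf.prob P B = 0 then 0
                  else measure_pmf.prob (cond_pmf P B) A)"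

definition cexp :: "'a pmf \<Rightarrow> ('a \<Rightarrow> real) \<Rightarrow> 'a set \<Rightarrow> real" where
  "cexp P f B = (if measure_pmf.prob P B = 0 then 0
                 else measure_pmf.expectation (cond_pmf P B) f)"

definition feature_groups ::
  "(nat \<Rightarrow> bool) pmf \<Rightarrow> nat \<Rightarrow> nat \<Rightarrow> (nat \<Rightarrow> nat set) \<Rightarrow> bool" where
  "feature_groups P p M grp \<longleftrightarrow>
     (\<forall>x\<in>set_pmf P. \<forall>j. j \<notin> {1..p} \<longrightarrow> \<not> x j) \<and>
     (\<forall>m\<in>{1..M}. grp m \<noteq> {}) \<and>
     (\<forall>m\<in>{1..M}. \<forall>m'\<in>{1..M}. m \<noteq> m' \<longrightarrow> grp m \<inter> grp m' = {}) \<and>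
     (\<Union>m\<in>{1..M}. grp m) = {1..p} \<and>
     (\<forall>m\<in>{1..M}. card (grp m) > 1 \<longrightarrow>
        measure_pmf.prob P {x. card {j\<in>grp m. x j} = 1} = 1)"

text \<open>Positivity part of p_min > 0 (all pairwise cell probabilities positive).\<close>
definition pmin_pos :: "(nat \<Rightarrow> bool) pmf \<Rightarrow> nat \<Rightarrow> (nat \<Rightarrow> nat set) \<Rightarrow> bool" where
  "pmin_pos P M grp \<longleftrightarrow>
     (\<forall>l k i j a b. 1 \<le> l \<and> l < k \<and> k \<le> M \<and> i \<in> grp l \<and> j \<in> grp k \<longrightarrow>
        measure_pmf.prob P {x. x i = a \<and> x j = b} > 0)"

definition pmin :: "(nat \<Rightarrow> bool) pmf \<Rightarrow> nat \<Rightarrow> (nat \<Rightarrow> nat set) \<Rightarrow> real" where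
  "pmin P M grp = Min {measure_pmf.prob P {x. x i = a \<and> x j = b} | l k i j a b.
      1 \<le> l \<and> l < k \<and> k \<le> M \<and> i \<in> grp l \<and> j \<in> grp k}"

definition marg_min :: "(nat \<Rightarrow> bool) pmf \<Rightarrow> nat \<Rightarrow> (nat \<Rightarrow> nat set) \<Rightarrow> real" where
  "marg_min P M grp = Min {measure_pmf.prob P {x. x l = a} | m l a.
      m \<in> {1..M} \<and> l \<in> grp m}"

definition delta0 :: "(nat \<Rightarrow> bool) pmf \<Rightarrow> nat \<Rightarrow> nat \<Rightarrow> (nat \<Rightarrow> nat set) \<Rightarrow> real" where
  "delta0 P p M grp = Max ((\<lambda>m. Inf {\<delta>::real. \<delta> \<ge> 0 \<and>
      measure_pmf.prob P {x. Max ((\<lambda>i. \<bar>cprob P {y. y i} (agree ({1..p} - grp m) x)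
            - measure_pmf.prob P {y. y i}\<bar>) ` grp m) \<le> \<delta>} = 1}) ` {1..M})"

end

theory Submission
  imports Defs
begin

lemma prob_sum:
  assumes "finite (set_pmf P)"
  shows "measure_pmf.prob P A = (\<Sum>y\<in>set_pmf P. pmf P y * indicator A y)"
proof -
  have "measure_pmf.prob P A = measure_pmf.prob P (A \<inter> set_pmf P)"
    by (simp add: measure_Int_set_pmf)
  also have "\<dots> = sum (pmf P) (A \<inter> set_pmf P)"
    using assms by (simp add: measure_measure_pmf_finite)
  also have "\<dots> = (\<Sum>y\<in>set_pmf P. pmf P y * indicator A y)"
    using assms by (simp add: sum.inter_restrict Int_commute indicator_def if_distrib cong: if_cong)
  finally show ?thesis .
qed

lemma exp_sum:
  assumes "finite (set_pmf P)"
  shows "measure_pmf.expectation P f = (\<Sum>y\<in>set_pmf P. pmf P y * f y)"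
  using integral_measure_pmf_real[OF assms, of P f] by (simp add: mult.commute)

lemma cexp_sum:
  assumes "finite (set_pmf P)"
  shows "cexp P f B = (\<Sum>y\<in>set_pmf P. pmf P y * (indicator B y * f y)) / measure_pmf.prob P B"
proof (cases "measure_pmf.prob P B = 0")
  case True then show ?thesis by (simp add: cexp_def)
next
  case False
  then have ne: "set_pmf P \<inter> B \<noteq> {}" by (simp add: measure_pmf_zero_iff)
  have "measure_pmf.expectation (cond_pmf P B) f = (\<Sum>a\<in>set_pmf P. f a * pmf (cond_pmf P B) a)"
    by (rule integral_measure_pmf_real) (use assms ne in auto)
  also have "\<dots> = (\<Sum>a\<in>set_pmf P. pmf P a * (indicator B a * f a) / measure_pmf.prob P B)"
    by (rule sum.cong) (auto simp: pmf_cond[OF ne] indicator_def)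
  finally show ?thesis using False by (simp add: cexp_def sum_divide_distrib)
qed

lemma cprob_sum:
  assumes "finite (set_pmf P)"
  shows "cprob P A B = measure_pmf.prob P (A \<inter> B) / measure_pmf.prob P B"
proof (cases "measure_pmf.prob P B = 0")
  case True then show ?thesis by (simp add: cprob_def)
next
  case False
  then have ne: "set_pmf P \<inter> B \<noteq> {}" by (simp add: measure_pmf_zero_iff)
  have fin: "finite (set_pmf (cond_pmf P B))" using assms ne by simp
  have "measure_pmf.prob (cond_pmf P B) A = (\<Sum>a\<in>set_pmf P \<inter> B. pmf (cond_pmf P B) a * indicator A a)"
    using prob_sum[OF fin] ne by simp
  also have "\<dots> = (\<Sum>a\<in>set_pmf P. pmf P a * indicator (A \<inter> B) a / measure_pmf.prob P B)"
    using assms by (subst sum.inter_restrict) (auto intro!: sum.cong simp: pmf_cond[OF ne] indicator_def)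
  finally show ?thesis using False by (simp add: cprob_def sum_divide_distrib prob_sum[OF assms])
qed

lemma agree_sym: "y' \<in> agree R y \<longleftrightarrow> y \<in> agree R y'"
  by (auto simp: agree_def)

lemma agree_eq: "y' \<in> agree R y \<Longrightarrow> agree R y' = agree R y"
  by (auto simp: agree_def)

lemma tower:
  assumes fin: "finite (set_pmf P)"
    and g: "\<And>y y'. y' \<in> agree R y \<Longrightarrow> g y' = g y"
  shows "(\<Sum>y\<in>set_pmf P. pmf P y * (g y * indicator E y))
       = (\<Sum>y\<in>set_pmf P. pmf P y * (g y * (measure_pmf.prob P (E \<inter> agree R y) / measure_pmf.prob P (agree R y))))"
proof -
  let ?S = "set_pmf P" and ?w = "pmf P"
  define N where "N y = measure_pmf.prob P (agree R y)" for y
  have Npos: "N y > 0" if "y \<in> ?S" for y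
    unfolding N_def using that by (intro measure_pmf_posI[of y]) (auto simp: agree_def)
  have "(\<Sum>y\<in>?S. ?w y * (g y * (measure_pmf.prob P (E \<inter> agree R y) / N y)))
      = (\<Sum>y\<in>?S. \<Sum>y'\<in>?S. ?w y * (g y * (?w y' * indicator (E \<inter> agree R y) y') / N y))"
    by (simp add: prob_sum[OF fin] sum_distrib_left sum_divide_distrib)
  also have "\<dots> = (\<Sum>y\<in>?S. \<Sum>y'\<in>?S. ?w y' * (g y' * indicator E y') * (?w y * indicator (agree R y') y / N y'))"
  proof (intro sum.cong refl)
    fix y y' assume "y \<in> ?S" "y' \<in> ?S"
    show "?w y * (g y * (?w y' * indicator (E \<inter> agree R y) y') / N y)
        = ?w y' * (g y' * indicator E y') * (?w y * indicator (agree R y') y / N y')"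
    proof (cases "y' \<in> agree R y")
      case True
      then have "y \<in> agree R y'" by (simp add: agree_sym)
      moreover have "g y' = g y" using g True .
      moreover have "N y' = N y" using True by (simp add: N_def agree_eq)
      ultimately show ?thesis using True by (simp add: indicator_def)
    next
      case False
      then have "y \<notin> agree R y'" by (simp add: agree_sym)
      then show ?thesis using False by (simp add: indicator_def)
    qed
  qed
  also have "\<dots> = (\<Sum>y'\<in>?S. ?w y' * (g y' * indicator E y') * ((\<Sum>y\<in>?S. ?w y * indicator (agree R y') y) / N y'))"
    by (subst sum.swap) (simp add: sum_distrib_left sum_divide_distrib)
  also have "\<dots> = (\<Sum>y'\<in>?S. ?w y' * (g y' * indicator E y'))"
  proof (intro sum.cong refl)
    fix y' assume y': "y' \<in> ?S"
    have "(\<Sum>y\<in>?S. ?w y * indicator (agree R y') y) = N y'"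
      by (simp add: N_def prob_sum[OF fin])
    then show "?w y' * (g y' * indicator E y') * ((\<Sum>y\<in>?S. ?w y * indicator (agree R y') y) / N y')
        = ?w y' * (g y' * indicator E y')" using Npos[OF y'] by simp
  qed
  finally show ?thesis by (simp add: N_def)
qed

lemma decomp:
  assumes fin: "finite (set_pmf P)"
    and g: "\<And>y y'. y' \<in> agree R y \<Longrightarrow> g y' = g y"
  shows "(\<Sum>y\<in>set_pmf P. pmf P y * (g y * indicator E y))
       = measure_pmf.prob P E * (\<Sum>y\<in>set_pmf P. pmf P y * g y)
         + (\<Sum>y\<in>set_pmf P. pmf P y * (g y * (cprob P E (agree R y) - measure_pmf.prob P E)))"
proof -
  have "(\<Sum>y\<in>set_pmf P. pmf P y * (g y * (cprob P E (agree R y) - measure_pmf.prob P E)))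
     = (\<Sum>y\<in>set_pmf P. pmf P y * (g y * cprob P E (agree R y))) - measure_pmf.prob P E * (\<Sum>y\<in>set_pmf P. pmf P y * g y)"
    by (simp add: algebra_simps sum_subtractf sum_distrib_left)
  then show ?thesis using tower[OF fin g, where E=E] by (simp add: cprob_sum[OF fin])
qed

lemma devbound:
  assumes dev: "\<forall>y\<in>set_pmf P. \<bar>cprob P E (agree R y) - c\<bar> \<le> d"
  shows "\<bar>\<Sum>y\<in>set_pmf P. pmf P y * (g y * (cprob P E (agree R y) - c))\<bar>
       \<le> d * (\<Sum>y\<in>set_pmf P. pmf P y * \<bar>g y\<bar>)"
proof -
  have "\<bar>\<Sum>y\<in>set_pmf P. pmf P y * (g y * (cprob P E (agree R y) - c))\<bar>
      \<le> (\<Sum>y\<in>set_pmf P. \<bar>pmf P y * (g y * (cprob P E (agree R y) - c))\<bar>)"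
    by (rule sum_abs)
  also have "\<dots> \<le> (\<Sum>y\<in>set_pmf P. d * (pmf P y * \<bar>g y\<bar>))"
  proof (rule sum_mono)
    fix y assume y: "y \<in> set_pmf P"
    have "\<bar>pmf P y * (g y * (cprob P E (agree R y) - c))\<bar>
        = pmf P y * \<bar>g y\<bar> * \<bar>cprob P E (agree R y) - c\<bar>" by (simp add: abs_mult)
    also have "\<dots> \<le> pmf P y * \<bar>g y\<bar> * d"
      using dev y by (intro mult_left_mono) auto
    finally show "\<bar>pmf P y * (g y * (cprob P E (agree R y) - c))\<bar> \<le> d * (pmf P y * \<bar>g y\<bar>)"
      by (simp add: mult.commute)
  qed
  finally show ?thesis by (simp add: sum_distrib_left)
qed

lemma core1:
  assumes fin: "finite (set_pmf P)"
    and g: "\<And>y y'. y' \<in> agree R y \<Longrightarrow> g y' = g y"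
    and dev: "\<forall>y\<in>set_pmf P. \<bar>cprob P E (agree R y) - measure_pmf.prob P E\<bar> \<le> d"
    and pE: "measure_pmf.prob P E > 0"
  shows "\<bar>measure_pmf.expectation P g - cexp P g E\<bar>
       \<le> d * measure_pmf.expectation P (\<lambda>y. \<bar>g y\<bar>) / measure_pmf.prob P E"
proof -
  define pE where "pE = measure_pmf.prob P E"
  define A where "A = (\<Sum>y\<in>set_pmf P. pmf P y * g y)"
  define B where "B = (\<Sum>y\<in>set_pmf P. pmf P y * (g y * (cprob P E (agree R y) - pE)))"
  define G where "G = (\<Sum>y\<in>set_pmf P. pmf P y * \<bar>g y\<bar>)"
  have d0: "(\<Sum>y\<in>set_pmf P. pmf P y * (g y * indicator E y)) = pE * A + B"
    using decomp[OF fin g, where E=E] unfolding pE_def A_def B_def .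
  have d1: "(\<Sum>y\<in>set_pmf P. pmf P y * (indicator E y * g y)) = pE * A + B"
    using d0 by (simp add: mult.commute)
  have b: "\<bar>B\<bar> \<le> d * G" unfolding B_def G_def pE_def by (rule devbound[OF dev])
  have "measure_pmf.expectation P g - cexp P g E = A - (pE * A + B) / pE"
    by (simp add: exp_sum[OF fin] cexp_sum[OF fin] d1 A_def pE_def)
  also have "\<dots> = - B / pE" using pE by (simp add: pE_def field_simps)
  finally have "\<bar>measure_pmf.expectation P g - cexp P g E\<bar> = \<bar>B\<bar> / pE"
    using pE by (simp add: pE_def)
  also have "\<dots> \<le> d * G / pE" using b pE by (simp add: pE_def divide_right_mono)
  finally show ?thesis by (simp add: G_def pE_def exp_sum[OF fin])
qed

lemma alg2:
  fixes pa D pE A B \<eta> d G :: real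
  assumes "pa > 0" "D > 0" "D = pE * pa + \<eta>" "\<bar>B\<bar> \<le> d * G" "\<bar>\<eta>\<bar> \<le> d * pa" "\<bar>A\<bar> \<le> G"
    "d \<ge> 0"
  shows "\<bar>(pE * A + B) / D - A / pa\<bar> \<le> 2 * d * G / D"
proof -
  have e: "(pE * A + B) / D - A / pa = (pa * B - A * \<eta>) / (pa * D)"
    using assms(1-3) by (simp add: field_simps)
  have "\<bar>pa * B - A * \<eta>\<bar> \<le> pa * \<bar>B\<bar> + \<bar>A\<bar> * \<bar>\<eta>\<bar>"
    by (metis abs_diff_le_iff abs_ge_self abs_mult abs_of_pos assms(1) abs_triangle_ineq4 order_trans)
  also have "\<dots> \<le> pa * (d * G) + G * (d * pa)"
    using assms by (intro add_mono mult_mono mult_left_mono) auto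
  finally have n: "\<bar>pa * B - A * \<eta>\<bar> \<le> pa * (2 * d * G)" by (simp add: algebra_simps)
  have "\<bar>(pa * B - A * \<eta>) / (pa * D)\<bar> = \<bar>pa * B - A * \<eta>\<bar> / (pa * D)"
    using assms(1,2) by simp
  also have "\<dots> \<le> pa * (2 * d * G) / (pa * D)"
    using n assms(1,2) by (intro divide_right_mono) auto
  also have "\<dots> = 2 * d * G / D" using assms(1) by simp
  finally show ?thesis using e by simp
qed

lemma core2:
  assumes fin: "finite (set_pmf P)"
    and g: "\<And>y y'. y' \<in> agree R y \<Longrightarrow> g y' = g y"
    and F: "\<And>y y'. y' \<in> agree R y \<Longrightarrow> (y' \<in> F \<longleftrightarrow> y \<in> F)"
    and dev: "\<forall>y\<in>set_pmf P. \<bar>cprob P E (agree R y) - measure_pmf.prob P E\<bar> \<le> d"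
    and Dpos: "measure_pmf.prob P (F \<inter> E) > 0" and d0: "d \<ge> 0"
  shows "\<bar>cexp P g (F \<inter> E) - cexp P g F\<bar>
       \<le> 2 * d * measure_pmf.expectation P (\<lambda>y. \<bar>g y\<bar>) / measure_pmf.prob P (F \<inter> E)"
proof -
  let ?S = "set_pmf P" and ?w = "pmf P"
  define pE where "pE = measure_pmf.prob P E"
  define D where "D = measure_pmf.prob P (F \<inter> E)"
  define pa where "pa = measure_pmf.prob P F"
  define gF where "gF y = indicator F y * g y" for y
  define iF where "iF y = (indicator F y :: real)" for y
  have gF: "gF y' = gF y" if "y' \<in> agree R y" for y y'
    using g[OF that] F[OF that] by (simp add: gF_def indicator_def)
  have iF: "iF y' = iF y" if "y' \<in> agree R y" for y y'
    using F[OF that] by (simp add: iF_def indicator_def)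
  define A where "A = (\<Sum>y\<in>?S. ?w y * gF y)"
  define B where "B = (\<Sum>y\<in>?S. ?w y * (gF y * (cprob P E (agree R y) - pE)))"
  define \<eta> where "\<eta> = (\<Sum>y\<in>?S. ?w y * (iF y * (cprob P E (agree R y) - pE)))"
  define G where "G = (\<Sum>y\<in>?S. ?w y * \<bar>g y\<bar>)"
  have e1: "(\<Sum>y\<in>?S. ?w y * (gF y * indicator E y)) = pE * A + B"
    using decomp[OF fin gF, where E=E] unfolding pE_def A_def B_def .
  have e2: "(\<Sum>y\<in>?S. ?w y * (iF y * indicator E y)) = pE * (\<Sum>y\<in>?S. ?w y * iF y) + \<eta>"
    using decomp[OF fin iF, where E=E] unfolding pE_def \<eta>_def .
  have pa: "pa = (\<Sum>y\<in>?S. ?w y * iF y)" by (simp add: pa_def iF_def prob_sum[OF fin])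
  have D: "D = pE * pa + \<eta>"
    using e2 pa by (simp add: D_def prob_sum[OF fin] iF_def indicator_inter_arith mult_ac)
  have c1: "cexp P g (F \<inter> E) = (pE * A + B) / D"
    using e1 by (simp add: cexp_sum[OF fin] D_def gF_def indicator_inter_arith mult_ac)
  have c2: "cexp P g F = A / pa"
    by (simp add: cexp_sum[OF fin] pa_def A_def gF_def)
  have Dp: "D > 0" using Dpos by (simp add: D_def)
  have "D \<le> pa" unfolding D_def pa_def by (rule measure_pmf.finite_measure_mono) auto
  with Dp have pap: "pa > 0" by simp
  have absgF: "\<bar>gF y\<bar> \<le> \<bar>g y\<bar>" for y by (simp add: gF_def indicator_def)
  have GF: "(\<Sum>y\<in>?S. ?w y * \<bar>gF y\<bar>) \<le> G"
    unfolding G_def by (intro sum_mono mult_left_mono absgF) auto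
  have b: "\<bar>B\<bar> \<le> d * G"
    using devbound[OF dev, of gF] GF d0 unfolding B_def pE_def
    by (meson mult_left_mono order_trans)
  have h: "\<bar>\<eta>\<bar> \<le> d * pa"
    using devbound[OF dev, of iF] unfolding \<eta>_def pE_def pa
    by (simp add: iF_def)
  have a: "\<bar>A\<bar> \<le> G"
    unfolding A_def using GF
    by (metis (no_types, lifting) abs_mult abs_of_nonneg order_trans pmf_nonneg sum_abs sum.cong)
  have "\<bar>(pE * A + B) / D - A / pa\<bar> \<le> 2 * d * G / D"
    by (rule alg2[OF pap Dp D b h a d0])
  then show ?thesis by (simp add: c1 c2 G_def D_def exp_sum[OF fin])
qed

lemma fin_supp:
  assumes fg: "feature_groups P p M grp"
  shows "finite (set_pmf P)"
proof -
  have "set_pmf P \<subseteq> (\<lambda>B j. j \<in> B) ` Pow {1..p}"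
  proof
    fix x assume x: "x \<in> set_pmf P"
    then have "x = (\<lambda>j. j \<in> {j\<in>{1..p}. x j})" using fg by (auto simp: feature_groups_def)
    then show "x \<in> (\<lambda>B j. j \<in> B) ` Pow {1..p}" by blast
  qed
  then show ?thesis by (rule finite_subset) auto
qed

lemma grp_sub:
  assumes fg: "feature_groups P p M grp" and m: "m \<in> {1..M}"
  shows "grp m \<subseteq> {1..p}"
  using fg m unfolding feature_groups_def by blast

lemma grp_disj:
  assumes fg: "feature_groups P p M grp" and "m \<in> {1..M}" "m' \<in> {1..M}" "m \<noteq> m'"
  shows "grp m \<inter> grp m' = {}"
  using fg assms unfolding feature_groups_def by blast

lemma grp_ne:
  assumes fg: "feature_groups P p M grp" and "m \<in> {1..M}"
  shows "grp m \<noteq> {}"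
  using fg assms unfolding feature_groups_def by blast

lemma prob_cong_S:
  assumes "\<forall>y\<in>set_pmf P. y \<in> A \<longleftrightarrow> y \<in> A'"
  shows "measure_pmf.prob P A = measure_pmf.prob P A'"
proof -
  have "A \<inter> set_pmf P = A' \<inter> set_pmf P" using assms by blast
  then show ?thesis by (metis measure_Int_set_pmf)
qed

lemma pcompl: "measure_pmf.prob P (-A) = 1 - measure_pmf.prob P A"
  using measure_pmf.prob_compl[of A P] by (simp add: Compl_eq_Diff_UNIV)

lemma prob1_all: "measure_pmf.prob P A = 1 \<Longrightarrow> y \<in> set_pmf P \<Longrightarrow> y \<in> A"
  using pcompl[of P A] measure_pmf_zero_iff[of P "-A"] by auto

lemma key:
  assumes fg: "feature_groups P p M grp" and m: "m \<in> {1..M}" and x: "x \<in> set_pmf P"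
  shows "\<exists>i\<in>grp m. \<exists>a. \<forall>y\<in>set_pmf P. (y \<in> agree (grp m) x \<longleftrightarrow> y i = a)"
proof (cases "card (grp m) > 1")
  case False
  have fin: "finite (grp m)" using grp_sub[OF fg m] by (rule finite_subset) simp
  have ne: "grp m \<noteq> {}" using grp_ne[OF fg m] .
  have "card (grp m) \<noteq> 0" using fin ne by simp
  then have "card (grp m) = 1" using False by linarith
  then obtain i where i: "grp m = {i}" by (rule card_1_singletonE)
  show ?thesis using i by (auto simp: agree_def)
next
  case True
  have "measure_pmf.prob P {x. card {j\<in>grp m. x j} = 1} = 1"
  proof -
    have "\<forall>m\<in>{1..M}. card (grp m) > 1 \<longrightarrow>
        measure_pmf.prob P {x. card {j\<in>grp m. x j} = 1} = 1"
      using fg unfolding feature_groups_def by (elim conjE)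
    then show ?thesis using m True by simp
  qed
  then have oh: "card {j\<in>grp m. y j} = 1" if "y \<in> set_pmf P" for y
    using prob1_all[OF \<open>measure_pmf.prob P {x. card {j\<in>grp m. x j} = 1} = 1\<close> that] by simp
  obtain i where i: "{j\<in>grp m. x j} = {i}" using oh[OF x] by (rule card_1_singletonE)
  have "\<forall>y\<in>set_pmf P. (y \<in> agree (grp m) x \<longleftrightarrow> y i = True)"
  proof
    fix y assume y: "y \<in> set_pmf P"
    obtain i' where i': "{j\<in>grp m. y j} = {i'}" using oh[OF y] by (rule card_1_singletonE)
    show "y \<in> agree (grp m) x \<longleftrightarrow> y i = True"
    proof
      assume "y \<in> agree (grp m) x"
      then show "y i = True" using i by (auto simp: agree_def)
    next
      assume yi: "y i = True"
      have ig: "i \<in> grp m" using i by blast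
      have "i \<in> {j\<in>grp m. y j}" using ig yi by simp
      then have "i' = i" using i' by simp
      then have "{j\<in>grp m. y j} = {j\<in>grp m. x j}" using i i' by simp
      then show "y \<in> agree (grp m) x" by (auto simp: agree_def)
    qed
  qed
  moreover have "i \<in> grp m" using i by blast
  ultimately show ?thesis by (intro bexI[of _ i] exI[of _ True])
qed

lemma cprob_01: "0 \<le> cprob P A B \<and> cprob P A B \<le> 1"
  by (simp add: cprob_def)

lemma devdelta:
  assumes fg: "feature_groups P p M grp" and m: "m \<in> {1..M}" and i: "i \<in> grp m"
    and y: "y \<in> set_pmf P"
  shows "\<bar>cprob P {y. y i} (agree ({1..p} - grp m) y) - measure_pmf.prob P {y. y i}\<bar>
      \<le> delta0 P p M grp"
proof -
  define \<Phi> where "\<Phi> x = Max ((\<lambda>i. \<bar>cprob P {y. y i} (agree ({1..p} - grp m) x)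
            - measure_pmf.prob P {y. y i}\<bar>) ` grp m)" for x
  define T where "T = {\<delta>::real. \<delta> \<ge> 0 \<and> measure_pmf.prob P {x. \<Phi> x \<le> \<delta>} = 1}"
  have fin: "finite (grp m)" using grp_sub[OF fg m] by (rule finite_subset) simp
  have le1: "\<Phi> x \<le> 1" for x
    unfolding \<Phi>_def
  proof (subst Max_le_iff)
    show "\<forall>a\<in>(\<lambda>i. \<bar>cprob P {y. y i} (agree ({1..p} - grp m) x) - measure_pmf.prob P {y. y i}\<bar>) ` grp m. a \<le> 1"
    proof
      fix a assume "a \<in> (\<lambda>i. \<bar>cprob P {y. y i} (agree ({1..p} - grp m) x) - measure_pmf.prob P {y. y i}\<bar>) ` grp m"
      then obtain j where "a = \<bar>cprob P {y. y j} (agree ({1..p} - grp m) x) - measure_pmf.prob P {y. y j}\<bar>" by blast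
      moreover have "0 \<le> measure_pmf.prob P {y. y j}" "measure_pmf.prob P {y. y j} \<le> 1" by auto
      moreover note cprob_01[of P "{y. y j}" "agree ({1..p} - grp m) x"]
      ultimately show "a \<le> 1" by linarith
    qed
  qed (use fin i in auto)
  have "1 \<in> T" using le1 by (simp add: T_def)
  then have Tne: "T \<noteq> {}" by blast
  have "\<Phi> y \<le> Inf T"
  proof (rule cInf_greatest[OF Tne])
    fix \<delta> assume "\<delta> \<in> T"
    then have "measure_pmf.prob P {x. \<Phi> x \<le> \<delta>} = 1" by (simp add: T_def)
    from prob1_all[OF this y] show "\<Phi> y \<le> \<delta>" by simp
  qed
  moreover have "\<bar>cprob P {y. y i} (agree ({1..p} - grp m) y) - measure_pmf.prob P {y. y i}\<bar> \<le> \<Phi> y"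
    unfolding \<Phi>_def using fin i by (intro Max_ge) auto
  moreover have "Inf T \<le> delta0 P p M grp"
    unfolding delta0_def T_def \<Phi>_def using m by (intro Max_ge) auto
  ultimately show ?thesis by linarith
qed

lemma cprob_cong_S:
  assumes fin: "finite (set_pmf P)" and "\<forall>y\<in>set_pmf P. y \<in> A \<longleftrightarrow> y \<in> A'"
  shows "cprob P A B = cprob P A' B"
proof -
  have "measure_pmf.prob P (A \<inter> B) = measure_pmf.prob P (A' \<inter> B)"
    using assms(2) by (intro prob_cong_S) blast
  then show ?thesis by (simp add: cprob_sum[OF fin])
qed

lemma devE:
  assumes fg: "feature_groups P p M grp" and m: "m \<in> {1..M}" and x: "x \<in> set_pmf P"
    and y: "y \<in> set_pmf P"
  shows "\<bar>cprob P (agree (grp m) x) (agree ({1..p} - grp m) y) - measure_pmf.prob P (agree (grp m) x)\<bar>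
      \<le> delta0 P p M grp"
proof -
  have fin: "finite (set_pmf P)" using fin_supp[OF fg] .
  obtain i where i: "i \<in> grp m" and ia0: "\<exists>a. \<forall>y\<in>set_pmf P. (y \<in> agree (grp m) x \<longleftrightarrow> y i = a)"
    using key[OF fg m x] by (rule bexE)
  obtain a where ia: "\<forall>y\<in>set_pmf P. (y \<in> agree (grp m) x \<longleftrightarrow> y i = a)"
    using ia0 by (rule exE)
  define B where "B = agree ({1..p} - grp m) y"
  have c: "cprob P (agree (grp m) x) B = cprob P {y. y i = a} B"
    using ia by (intro cprob_cong_S[OF fin]) simp
  have pr: "measure_pmf.prob P (agree (grp m) x) = measure_pmf.prob P {y. y i = a}"
    using ia by (intro prob_cong_S) simp
  have dv: "\<bar>cprob P {y. y i} B - measure_pmf.prob P {y. y i}\<bar> \<le> delta0 P p M grp"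
    unfolding B_def by (rule devdelta[OF fg m i y])
  show ?thesis
  proof (cases a)
    case True
    then show ?thesis using c pr dv by (simp add: B_def)
  next
    case False
    have pB: "measure_pmf.prob P B > 0" unfolding B_def using y
      by (intro measure_pmf_posI[of y]) (auto simp: agree_def)
    have eq: "{y. y i = a} = - {y. y i}" using False by auto
    have "measure_pmf.prob P (-{y. y i} \<inter> B) = measure_pmf.prob P (B - (B \<inter> {y. y i}))"
      by (intro arg_cong[where f="measure_pmf.prob P"]) auto
    also have "\<dots> = measure_pmf.prob P B - measure_pmf.prob P (B \<inter> {y. y i})"
      by (rule measure_pmf.finite_measure_Diff) auto
    finally have "cprob P (-{y. y i}) B = 1 - cprob P {y. y i} B"
      using pB by (simp add: cprob_sum[OF fin] Int_commute diff_divide_distrib)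
    moreover have "measure_pmf.prob P (-{y. y i}) = 1 - measure_pmf.prob P {y. y i}" by (rule pcompl)
    ultimately show ?thesis using c pr dv eq by (simp add: B_def abs_minus_commute)
  qed
qed

lemma probE_pos:
  assumes "x \<in> set_pmf P"
  shows "measure_pmf.prob P (agree G x) > 0"
  using assms by (intro measure_pmf_posI[of x]) (auto simp: agree_def)

lemma delta0_nonneg:
  assumes fg: "feature_groups P p M grp" and m: "m \<in> {1..M}"
  shows "delta0 P p M grp \<ge> 0"
proof -
  obtain x where x: "x \<in> set_pmf P" using set_pmf_not_empty[of P] by blast
  show ?thesis using devE[OF fg m x x] by linarith
qed

lemma marg_fin:
  assumes fg: "feature_groups P p M grp"
  shows "finite {measure_pmf.prob P {x. x l = a} | m l a. m \<in> {1..M} \<and> l \<in> grp m}"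
proof (rule finite_subset)
  show "{measure_pmf.prob P {x. x l = a} | m l a. m \<in> {1..M} \<and> l \<in> grp m}
      \<subseteq> (\<lambda>(l,a). measure_pmf.prob P {x. x l = a}) ` ({1..p} \<times> UNIV)"
    using grp_sub[OF fg] by fastforce
qed auto

lemma marg_le:
  assumes fg: "feature_groups P p M grp" and m: "m \<in> {1..M}" and x: "x \<in> set_pmf P"
  shows "marg_min P M grp \<le> measure_pmf.prob P (agree (grp m) x)"
proof -
  obtain i where i: "i \<in> grp m" and ia0: "\<exists>a. \<forall>y\<in>set_pmf P. (y \<in> agree (grp m) x \<longleftrightarrow> y i = a)"
    using key[OF fg m x] by (rule bexE)
  obtain a where ia: "\<forall>y\<in>set_pmf P. (y \<in> agree (grp m) x \<longleftrightarrow> y i = a)"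
    using ia0 by (rule exE)
  have pr: "measure_pmf.prob P (agree (grp m) x) = measure_pmf.prob P {y. y i = a}"
    using ia by (intro prob_cong_S) simp
  show ?thesis unfolding marg_min_def pr
    by (rule Min_le[OF marg_fin[OF fg]]) (use m i in blast)
qed

lemma marg_nonneg:
  assumes fg: "feature_groups P p M grp" and m: "m \<in> {1..M}"
  shows "marg_min P M grp \<ge> 0"
proof -
  obtain i where i: "i \<in> grp m" using grp_ne[OF fg m] by blast
  have ne: "{measure_pmf.prob P {x. x l = a} | m l a. m \<in> {1..M} \<and> l \<in> grp m} \<noteq> {}"
    using m i by blast
  show ?thesis unfolding marg_min_def using Min_in[OF marg_fin[OF fg] ne] by auto
qed

lemma marg_pos:
  assumes fg: "feature_groups P p M grp" and pp: "pmin_pos P M grp" and M: "M \<ge> 2"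
  shows "marg_min P M grp > 0"
proof -
  have m1: "1 \<in> {1..M}" using M by simp
  obtain i where i: "i \<in> grp 1" using grp_ne[OF fg m1] by blast
  have ne: "{measure_pmf.prob P {x. x l = a} | m l a. m \<in> {1..M} \<and> l \<in> grp m} \<noteq> {}"
    using m1 i by blast
  have "\<forall>v \<in> {measure_pmf.prob P {x. x l = a} | m l a. m \<in> {1..M} \<and> l \<in> grp m}. v > 0"
  proof
    fix v assume "v \<in> {measure_pmf.prob P {x. x l = a} | m l a. m \<in> {1..M} \<and> l \<in> grp m}"
    then obtain m l a where v: "v = measure_pmf.prob P {x. x l = a}" and m: "m \<in> {1..M}" and l: "l \<in> grp m"
      by blast
    obtain m' where m': "m' \<in> {1..M}" "m' \<noteq> m"
      using M m by (metis atLeastAtMost_iff one_le_numeral order.trans le_refl numeral_le_iff semiring_norm(69) Suc_1 not_less_eq_eq one_add_one)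
    obtain j where j: "j \<in> grp m'" using grp_ne[OF fg m'(1)] by blast
    have pos: "measure_pmf.prob P {x. x l = a \<and> x j = b} > 0
        \<or> measure_pmf.prob P {x. x j = b \<and> x l = a} > 0" for b
    proof (cases "m < m'")
      case True then show ?thesis using pp m m' l j unfolding pmin_pos_def by auto
    next
      case False then have "m' < m" using m'(2) by simp
      then show ?thesis using pp m m' l j unfolding pmin_pos_def by auto
    qed
    have "measure_pmf.prob P {x. x l = a \<and> x j = True} > 0"
      using pos[of True] by (simp add: conj_commute)
    moreover have "measure_pmf.prob P {x. x l = a \<and> x j = True} \<le> measure_pmf.prob P {x. x l = a}"
      by (rule measure_pmf.finite_measure_mono) auto
    ultimately show "v > 0" using v by linarith
  qed
  then show ?thesis unfolding marg_min_def using Min_in[OF marg_fin[OF fg] ne] by auto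
qed

lemma pmin_fin:
  assumes fg: "feature_groups P p M grp"
  shows "finite {measure_pmf.prob P {x. x i = a \<and> x j = b} | l k i j a b.
      1 \<le> l \<and> l < k \<and> k \<le> M \<and> i \<in> grp l \<and> j \<in> grp k}"
proof (rule finite_subset)
  show "{measure_pmf.prob P {x. x i = a \<and> x j = b} | l k i j a b.
      1 \<le> l \<and> l < k \<and> k \<le> M \<and> i \<in> grp l \<and> j \<in> grp k}
      \<subseteq> (\<lambda>(i,j,a,b). measure_pmf.prob P {x. x i = a \<and> x j = b}) ` ({1..p} \<times> {1..p} \<times> UNIV \<times> UNIV)"
  proof
    fix v assume "v \<in> {measure_pmf.prob P {x. x i = a \<and> x j = b} | l k i j a b.
      1 \<le> l \<and> l < k \<and> k \<le> M \<and> i \<in> grp l \<and> j \<in> grp k}"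
    then obtain l k i j a b where v: "v = measure_pmf.prob P {x. x i = a \<and> x j = b}"
      and c: "1 \<le> l" "l < k" "k \<le> M" "i \<in> grp l" "j \<in> grp k" by blast
    have "i \<in> {1..p}" using grp_sub[OF fg, of l] c by auto
    moreover have "j \<in> {1..p}" using grp_sub[OF fg, of k] c by auto
    ultimately show "v \<in> (\<lambda>(i,j,a,b). measure_pmf.prob P {x. x i = a \<and> x j = b}) ` ({1..p} \<times> {1..p} \<times> UNIV \<times> UNIV)"
      using v by (intro image_eqI[of _ _ "(i,j,a,b)"]) auto
  qed
qed auto

lemma pmin_facts:
  assumes fg: "feature_groups P p M grp" and pp: "pmin_pos P M grp"
    and l: "l \<in> {1..M}" and k: "k \<in> {1..M}" and lk: "l \<noteq> k" and x: "x \<in> set_pmf P"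
  shows "pmin P M grp > 0 \<and> pmin P M grp \<le> measure_pmf.prob P (agree (grp k) x \<inter> agree (grp l) x)"
proof -
  let ?Set = "{measure_pmf.prob P {x. x i = a \<and> x j = b} | l k i j a b.
      1 \<le> l \<and> l < k \<and> k \<le> M \<and> i \<in> grp l \<and> j \<in> grp k}"
  obtain i where i: "i \<in> grp k" and ia0: "\<exists>a. \<forall>y\<in>set_pmf P. (y \<in> agree (grp k) x \<longleftrightarrow> y i = a)"
    using key[OF fg k x] by (rule bexE)
  obtain a where ia: "\<forall>y\<in>set_pmf P. (y \<in> agree (grp k) x \<longleftrightarrow> y i = a)"
    using ia0 by (rule exE)
  obtain j where j: "j \<in> grp l" and jb0: "\<exists>b. \<forall>y\<in>set_pmf P. (y \<in> agree (grp l) x \<longleftrightarrow> y j = b)"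
    using key[OF fg l x] by (rule bexE)
  obtain b where jb: "\<forall>y\<in>set_pmf P. (y \<in> agree (grp l) x \<longleftrightarrow> y j = b)"
    using jb0 by (rule exE)
  have pr: "measure_pmf.prob P (agree (grp k) x \<inter> agree (grp l) x) = measure_pmf.prob P {y. y i = a \<and> y j = b}"
    using ia jb by (intro prob_cong_S) simp
  have inS: "measure_pmf.prob P {y. y i = a \<and> y j = b} \<in> ?Set"
  proof (cases "k < l")
    case True then show ?thesis using i j k l
      by (intro CollectI exI[of _ k] exI[of _ l] exI[of _ i] exI[of _ j] exI[of _ a] exI[of _ b]) simp
  next
    case False then have "l < k" using lk by simp
    moreover have "{y. y i = a \<and> y j = b} = {y. y j = b \<and> y i = a}" by auto
    ultimately show ?thesis using i j k l
      by (intro CollectI exI[of _ l] exI[of _ k] exI[of _ j] exI[of _ i] exI[of _ b] exI[of _ a]) simp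
  qed
  have ne: "?Set \<noteq> {}" using inS by blast
  have allpos: "\<forall>v\<in>?Set. v > 0"
  proof
    fix v assume "v \<in> ?Set"
    then show "v > 0" using pp unfolding pmin_pos_def by auto
  qed
  have "pmin P M grp \<in> ?Set" unfolding pmin_def by (rule Min_in[OF pmin_fin[OF fg] ne])
  then have "pmin P M grp > 0" using allpos by blast
  moreover have "pmin P M grp \<le> measure_pmf.prob P {y. y i = a \<and> y j = b}"
    unfolding pmin_def by (rule Min_le[OF pmin_fin[OF fg] inS])
  ultimately show ?thesis using pr by simp
qed

lemma restr_dep:
  assumes "R' \<subseteq> R" "y' \<in> agree R y"
  shows "q (restr R' y') = q (restr R' y)"
proof -
  have "restr R' y' = restr R' y" using assms by (auto simp: restr_def agree_def)
  then show ?thesis by simp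
qed

lemma Gnn: "finite (set_pmf P) \<Longrightarrow> 0 \<le> measure_pmf.expectation P (\<lambda>y. \<bar>(g y :: real)\<bar>)"
  by (simp add: exp_sum sum_nonneg)

lemma agree_Un: "agree (A \<union> B) x = agree A x \<inter> agree B x"
  by (auto simp: agree_def)

lemma dvle: "0 \<le> c \<Longrightarrow> 0 < b \<Longrightarrow> b \<le> a \<Longrightarrow> c / a \<le> c / (b::real)"
  by (simp add: divide_left_mono)

theorem lemma6:
  fixes P :: "(nat \<Rightarrow> bool) pmf" and p M :: nat and grp :: "nat \<Rightarrow> nat set"
  assumes fg: "feature_groups P p M grp"
    and pmin_pos: "pmin_pos P M grp"
  shows
    "(\<forall>m\<in>{1..M}. \<forall>q :: (nat \<Rightarrow> bool) \<Rightarrow> real.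
        AE x in measure_pmf P.
          \<bar>measure_pmf.expectation P (\<lambda>y. q (restr ({1..p} - grp m) y))
           - cexp P (\<lambda>y. q (restr ({1..p} - grp m) y)) (agree (grp m) x)\<bar>
          \<le> delta0 P p M grp
             * measure_pmf.expectation P (\<lambda>y. \<bar>q (restr ({1..p} - grp m) y)\<bar>)
             / marg_min P M grp)
   \<and> (\<forall>l\<in>{1..M}. \<forall>k\<in>{1..M}. l \<noteq> k \<longrightarrow> (\<forall>q :: (nat \<Rightarrow> bool) \<Rightarrow> real.
        AE x in measure_pmf P.
          \<bar>cexp P (\<lambda>y. q (restr ({1..p} - grp l) y)) (agree (grp k \<union> grp l) x)
           - cexp P (\<lambda>y. q (restr ({1..p} - grp l) y)) (agree (grp k) x)\<bar>
          \<le> 2 * delta0 P p M grp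
             * measure_pmf.expectation P (\<lambda>y. \<bar>q (restr ({1..p} - grp l) y)\<bar>)
             / pmin P M grp))
   \<and> (\<forall>l\<in>{1..M}. \<forall>k\<in>{1..M}. l \<noteq> k \<longrightarrow> (\<forall>q :: (nat \<Rightarrow> bool) \<Rightarrow> real.
        AE x in measure_pmf P.
          \<bar>cexp P (\<lambda>y. q (restr ({1..p} - (grp k \<union> grp l)) y)) (agree (grp k \<union> grp l) x)
           - measure_pmf.expectation P (\<lambda>y. q (restr ({1..p} - (grp k \<union> grp l)) y))\<bar>
          \<le> 3 * delta0 P p M grp
             * measure_pmf.expectation P (\<lambda>y. \<bar>q (restr ({1..p} - (grp k \<union> grp l)) y)\<bar>)
             / pmin P M grp))"
proof (intro conjI ballI allI impI AE_pmfI)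
  have fin: "finite (set_pmf P)" by (rule fin_supp[OF fg])
  fix m and q :: "(nat \<Rightarrow> bool) \<Rightarrow> real" and x assume m: "m \<in> {1..M}" and x: "x \<in> set_pmf P"
  define R where "R = {1..p} - grp m"
  define g where "g = (\<lambda>y. q (restr R y))"
  define E where "E = agree (grp m) x"
  define G where "G = measure_pmf.expectation P (\<lambda>y. \<bar>g y\<bar>)"
  have gR: "g y' = g y" if "y' \<in> agree R y" for y y'
    unfolding g_def using restr_dep[OF subset_refl that] .
  have pE: "measure_pmf.prob P E > 0" unfolding E_def by (rule probE_pos[OF x])
  have G0: "G \<ge> 0" unfolding G_def by (rule Gnn[OF fin])
  have d0: "delta0 P p M grp \<ge> 0" by (rule delta0_nonneg[OF fg m])
  have "\<bar>measure_pmf.expectation P g - cexp P g E\<bar> \<le> delta0 P p M grp * G / marg_min P M grp"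
  proof (cases "M \<ge> 2")
    case True
    have dev: "\<forall>y\<in>set_pmf P. \<bar>cprob P E (agree R y) - measure_pmf.prob P E\<bar> \<le> delta0 P p M grp"
      unfolding E_def R_def using devE[OF fg m x] by blast
    have "\<bar>measure_pmf.expectation P g - cexp P g E\<bar> \<le> delta0 P p M grp * G / measure_pmf.prob P E"
      unfolding G_def by (rule core1[OF fin gR dev pE])
    also have "\<dots> \<le> delta0 P p M grp * G / marg_min P M grp"
      using marg_pos[OF fg pmin_pos True] marg_le[OF fg m x] d0 G0 unfolding E_def
      by (intro dvle) auto
    finally show ?thesis .
  next
    case False
    then have M1: "M = 1" "m = 1" using m by auto
    have "(\<Union>m\<in>{1..M}. grp m) = {1..p}" using fg unfolding feature_groups_def by (elim conjE)
    then have "grp 1 = {1..p}" using M1 by simp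
    then have R0: "R = {}" unfolding R_def using M1 by simp
    have dev: "\<forall>y\<in>set_pmf P. \<bar>cprob P E (agree R y) - measure_pmf.prob P E\<bar> \<le> 0"
      by (simp add: R0 agree_def cprob_sum[OF fin])
    have "\<bar>measure_pmf.expectation P g - cexp P g E\<bar> \<le> 0 * G / measure_pmf.prob P E"
      unfolding G_def by (rule core1[OF fin gR dev pE])
    also have "\<dots> \<le> delta0 P p M grp * G / marg_min P M grp"
      using marg_nonneg[OF fg m] d0 G0 by simp
    finally show ?thesis .
  qed
  then show "\<bar>measure_pmf.expectation P (\<lambda>y. q (restr ({1..p} - grp m) y))
           - cexp P (\<lambda>y. q (restr ({1..p} - grp m) y)) (agree (grp m) x)\<bar>
          \<le> delta0 P p M grp
             * measure_pmf.expectation P (\<lambda>y. \<bar>q (restr ({1..p} - grp m) y)\<bar>)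
             / marg_min P M grp"
    by (simp add: g_def R_def E_def G_def)
next
  have fin: "finite (set_pmf P)" by (rule fin_supp[OF fg])
  fix l k and q :: "(nat \<Rightarrow> bool) \<Rightarrow> real" and x assume l: "l \<in> {1..M}" and k: "k \<in> {1..M}" and lk: "l \<noteq> k" and x: "x \<in> set_pmf P"
  define R where "R = {1..p} - grp l"
  define g where "g = (\<lambda>y. q (restr R y))"
  define E where "E = agree (grp l) x"
  define F where "F = agree (grp k) x"
  define G where "G = measure_pmf.expectation P (\<lambda>y. \<bar>g y\<bar>)"
  have gR: "g y' = g y" if "y' \<in> agree R y" for y y'
    unfolding g_def using restr_dep[OF subset_refl that] .
  have kR: "grp k \<subseteq> R" unfolding R_def using grp_sub[OF fg k] grp_disj[OF fg k l] lk by blast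
  have FR: "(y' \<in> F \<longleftrightarrow> y \<in> F)" if "y' \<in> agree R y" for y y'
    using that kR unfolding F_def agree_def by auto
  have G0: "G \<ge> 0" unfolding G_def by (rule Gnn[OF fin])
  have d0: "delta0 P p M grp \<ge> 0" by (rule delta0_nonneg[OF fg l])
  have dev: "\<forall>y\<in>set_pmf P. \<bar>cprob P E (agree R y) - measure_pmf.prob P E\<bar> \<le> delta0 P p M grp"
    unfolding E_def R_def using devE[OF fg l x] by blast
  have pm: "pmin P M grp > 0 \<and> pmin P M grp \<le> measure_pmf.prob P (F \<inter> E)"
    unfolding F_def E_def by (rule pmin_facts[OF fg pmin_pos l k lk x])
  then have Dp: "measure_pmf.prob P (F \<inter> E) > 0" by linarith
  have "\<bar>cexp P g (F \<inter> E) - cexp P g F\<bar> \<le> 2 * delta0 P p M grp * G / measure_pmf.prob P (F \<inter> E)"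
    unfolding G_def by (rule core2[OF fin gR FR dev Dp d0])
  also have "\<dots> \<le> 2 * delta0 P p M grp * G / pmin P M grp"
    using pm d0 G0 by (intro dvle) auto
  finally show "\<bar>cexp P (\<lambda>y. q (restr ({1..p} - grp l) y)) (agree (grp k \<union> grp l) x)
           - cexp P (\<lambda>y. q (restr ({1..p} - grp l) y)) (agree (grp k) x)\<bar>
          \<le> 2 * delta0 P p M grp
             * measure_pmf.expectation P (\<lambda>y. \<bar>q (restr ({1..p} - grp l) y)\<bar>)
             / pmin P M grp"
    by (simp add: g_def R_def E_def F_def G_def agree_Un)
next
  have fin: "finite (set_pmf P)" by (rule fin_supp[OF fg])
  fix l k and q :: "(nat \<Rightarrow> bool) \<Rightarrow> real" and x assume l: "l \<in> {1..M}" and k: "k \<in> {1..M}" and lk: "l \<noteq> k" and x: "x \<in> set_pmf P"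
  define R where "R = {1..p} - grp l"
  define Rk where "Rk = {1..p} - grp k"
  define g where "g = (\<lambda>y. q (restr ({1..p} - (grp k \<union> grp l)) y))"
  define E where "E = agree (grp l) x"
  define F where "F = agree (grp k) x"
  define G where "G = measure_pmf.expectation P (\<lambda>y. \<bar>g y\<bar>)"
  have gR: "g y' = g y" if "y' \<in> agree R y" for y y'
    unfolding g_def by (rule restr_dep[OF _ that]) (auto simp: R_def)
  have gRk: "g y' = g y" if "y' \<in> agree Rk y" for y y'
    unfolding g_def by (rule restr_dep[OF _ that]) (auto simp: Rk_def)
  have kR: "grp k \<subseteq> R" unfolding R_def using grp_sub[OF fg k] grp_disj[OF fg k l] lk by blast
  have FR: "(y' \<in> F \<longleftrightarrow> y \<in> F)" if "y' \<in> agree R y" for y y'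
    using that kR unfolding F_def agree_def by auto
  have G0: "G \<ge> 0" unfolding G_def by (rule Gnn[OF fin])
  have d0: "delta0 P p M grp \<ge> 0" by (rule delta0_nonneg[OF fg l])
  have dev: "\<forall>y\<in>set_pmf P. \<bar>cprob P E (agree R y) - measure_pmf.prob P E\<bar> \<le> delta0 P p M grp"
    unfolding E_def R_def using devE[OF fg l x] by blast
  have devk: "\<forall>y\<in>set_pmf P. \<bar>cprob P F (agree Rk y) - measure_pmf.prob P F\<bar> \<le> delta0 P p M grp"
    unfolding F_def Rk_def using devE[OF fg k x] by blast
  have pm: "pmin P M grp > 0 \<and> pmin P M grp \<le> measure_pmf.prob P (F \<inter> E)"
    unfolding F_def E_def by (rule pmin_facts[OF fg pmin_pos l k lk x])
  then have Dp: "measure_pmf.prob P (F \<inter> E) > 0" by linarith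
  have "measure_pmf.prob P (F \<inter> E) \<le> measure_pmf.prob P F"
    by (rule measure_pmf.finite_measure_mono) auto
  then have pF: "pmin P M grp \<le> measure_pmf.prob P F" "measure_pmf.prob P F > 0" using pm by linarith+
  have a1: "\<bar>cexp P g (F \<inter> E) - cexp P g F\<bar> \<le> 2 * delta0 P p M grp * G / measure_pmf.prob P (F \<inter> E)"
    unfolding G_def by (rule core2[OF fin gR FR dev Dp d0])
  also have "\<dots> \<le> 2 * delta0 P p M grp * G / pmin P M grp"
    using pm d0 G0 by (intro dvle) auto
  finally have b1: "\<bar>cexp P g (F \<inter> E) - cexp P g F\<bar> \<le> 2 * delta0 P p M grp * G / pmin P M grp" .
  have "\<bar>measure_pmf.expectation P g - cexp P g F\<bar> \<le> delta0 P p M grp * G / measure_pmf.prob P F"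
    unfolding G_def by (rule core1[OF fin gRk devk pF(2)])
  also have "\<dots> \<le> delta0 P p M grp * G / pmin P M grp"
    using pm pF d0 G0 by (intro dvle) auto
  finally have b2: "\<bar>cexp P g F - measure_pmf.expectation P g\<bar> \<le> delta0 P p M grp * G / pmin P M grp"
    by (simp add: abs_minus_commute)
  have "\<bar>cexp P g (F \<inter> E) - measure_pmf.expectation P g\<bar>
      \<le> \<bar>cexp P g (F \<inter> E) - cexp P g F\<bar> + \<bar>cexp P g F - measure_pmf.expectation P g\<bar>"
    by linarith
  also have "\<dots> \<le> 2 * delta0 P p M grp * G / pmin P M grp + delta0 P p M grp * G / pmin P M grp"
    using b1 b2 by (rule add_mono)
  also have "\<dots> = 3 * delta0 P p M grp * G / pmin P M grp" by (simp add: field_simps)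
  finally show "\<bar>cexp P (\<lambda>y. q (restr ({1..p} - (grp k \<union> grp l)) y)) (agree (grp k \<union> grp l) x)
           - measure_pmf.expectation P (\<lambda>y. q (restr ({1..p} - (grp k \<union> grp l)) y))\<bar>
          \<le> 3 * delta0 P p M grp
             * measure_pmf.expectation P (\<lambda>y. \<bar>q (restr ({1..p} - (grp k \<union> grp l)) y)\<bar>)
             / pmin P M grp"
    by (simp add: g_def E_def F_def G_def agree_Un)
qed

end
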